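(* Let $G$ be a finitely generated group with growth function $g_G(n)$. Then $U_{W(G)}(n) \ge g_G(\lfloor n/2\rfloor)$ for all $n$.
   Context: For a finite generating set $X$ of $G$, $|g|_X$ is the length of a shortest word over $X\cup X^{-1}$ representing $g$, and $g_G(n)=|\{g\in G: |g|_X\le n\}|$ is the growth function. $W(G)=W(G,X)$ is the word problem language: the set of words over $X\cup X^{-1}$ representing the identity of $G$. A finite set $S$ of strings is uniformly $n$-dissimilar for a language $\mathtt{L}$ if for each $w\in S$ there is a string $v$ with $|wv|\le n$, $wv\in\mathtt{L}$, and for every $w'\in S$, $w'\neq w$, $|w'v|\le n$ and $w'v\notin\mathtt{L}$. $U_{\mathtt{L}}(n)$ is the maximum cardinality of a uniformly $n$-dissimilar set for $\mathtt{L}$. *)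

theory Defs
  imports "HOL-Algebra.Algebra"
begin

text \<open>Letters of the alphabet X \<union> X^-1: a letter (x, False) stands for the generator x,
  a letter (x, True) for its formal inverse x^-1.\<close>

definition alphabet :: "'a set \<Rightarrow> ('a * bool) set" where
  "alphabet Y = Sigma Y (\<lambda>_. (UNIV :: bool set))"

definition letter_val :: "('a, 'b) monoid_scheme \<Rightarrow> 'a * bool \<Rightarrow> 'a" where
  "letter_val G l = (if snd l then m_inv G (fst l) else fst l)"

fun word_eval :: "('a, 'b) monoid_scheme \<Rightarrow> ('a * bool) list \<Rightarrow> 'a" where
  "word_eval G [] = one G"
| "word_eval G (l # w) = monoid.mult G (letter_val G l) (word_eval G w)"

definition word_length :: "('a, 'b) monoid_scheme \<Rightarrow> 'a set \<Rightarrow> 'a \<Rightarrow> nat" where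
  "word_length G Y g = (LEAST k. \<exists>w \<in> lists (alphabet Y). length w = k \<and> word_eval G w = g)"

definition growth :: "('a, 'b) monoid_scheme \<Rightarrow> 'a set \<Rightarrow> nat \<Rightarrow> nat" where
  "growth G Y n = card {g \<in> carrier G. word_length G Y g \<le> n}"

definition word_problem :: "('a, 'b) monoid_scheme \<Rightarrow> 'a set \<Rightarrow> ('a * bool) list set" where
  "word_problem G Y = {w \<in> lists (alphabet Y). word_eval G w = one G}"

definition unif_dissimilar :: "'c set \<Rightarrow> 'c list set \<Rightarrow> nat \<Rightarrow> 'c list set \<Rightarrow> bool" where
  "unif_dissimilar \<Sigma> L n S \<longleftrightarrow> finite S \<and> S \<subseteq> lists \<Sigma> \<and>
     (\<forall>w \<in> S. \<exists>v \<in> lists \<Sigma>. length (w @ v) \<le> n \<and> w @ v \<in> L \<and>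
        (\<forall>w' \<in> S. w' \<noteq> w \<longrightarrow> length (w' @ v) \<le> n \<and> w' @ v \<notin> L))"

definition U_fun :: "'c set \<Rightarrow> 'c list set \<Rightarrow> nat \<Rightarrow> nat" where
  "U_fun \<Sigma> L n = Max {card S | S. unif_dissimilar \<Sigma> L n S}"

end

theory Submission
  imports Defs
begin

definition flipl :: "'a * bool \<Rightarrow> 'a * bool" where
  "flipl l = (fst l, \<not> snd l)"

definition winv :: "('a * bool) list \<Rightarrow> ('a * bool) list" where
  "winv w = rev (map flipl w)"

lemma winv_lists: "w \<in> lists (alphabet Y) \<Longrightarrow> winv w \<in> lists (alphabet Y)"
  unfolding winv_def flipl_def alphabet_def by (induction w) auto

lemma winv_length[simp]: "length (winv w) = length w"
  by (simp add: winv_def)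

lemma winv_Cons: "winv (l # w) = winv w @ [flipl l]"
  by (simp add: winv_def)

context group
begin

lemma letter_val_carrier:
  "l \<in> alphabet Y \<Longrightarrow> Y \<subseteq> carrier G \<Longrightarrow> letter_val G l \<in> carrier G"
  by (auto simp: letter_val_def alphabet_def)

lemma eval_carrier:
  "w \<in> lists (alphabet Y) \<Longrightarrow> Y \<subseteq> carrier G \<Longrightarrow> word_eval G w \<in> carrier G"
  by (induction w) (auto intro: letter_val_carrier)

lemma eval_append:
  "u \<in> lists (alphabet Y) \<Longrightarrow> v \<in> lists (alphabet Y) \<Longrightarrow> Y \<subseteq> carrier G \<Longrightarrow>
   word_eval G (u @ v) = word_eval G u \<otimes> word_eval G v"
proof (induction u)
  case Nil
  then show ?case using eval_carrier by simp
next
  case (Cons l u)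
  have l: "letter_val G l \<in> carrier G" by (rule letter_val_carrier[of l Y]) (use Cons.prems in auto)
  have u: "word_eval G u \<in> carrier G" by (rule eval_carrier[of u Y]) (use Cons.prems in auto)
  have v: "word_eval G v \<in> carrier G" by (rule eval_carrier[of v Y]) (use Cons.prems in auto)
  show ?case using Cons m_assoc[OF l u v] by simp
qed

lemma letter_val_flip:
  "l \<in> alphabet Y \<Longrightarrow> Y \<subseteq> carrier G \<Longrightarrow> letter_val G (flipl l) = inv (letter_val G l)"
  by (auto simp: letter_val_def flipl_def alphabet_def)

lemma eval_winv:
  "w \<in> lists (alphabet Y) \<Longrightarrow> Y \<subseteq> carrier G \<Longrightarrow> word_eval G (winv w) = inv (word_eval G w)"
proof (induction w)
  case Nil
  then show ?case by (simp add: winv_def)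
next
  case (Cons l w)
  have l: "l \<in> alphabet Y" and w: "w \<in> lists (alphabet Y)" using Cons.prems by auto
  have fl: "[flipl l] \<in> lists (alphabet Y)" using l by (auto simp: flipl_def alphabet_def)
  have "word_eval G (winv (l # w)) = word_eval G (winv w) \<otimes> word_eval G [flipl l]"
    unfolding winv_Cons using eval_append[OF winv_lists[OF w] fl Cons.prems(2)] .
  also have "\<dots> = inv (word_eval G w) \<otimes> inv (letter_val G l)"
    using Cons letter_val_flip[OF l Cons.prems(2)] l letter_val_carrier w eval_carrier by auto
  also have "\<dots> = inv (letter_val G l \<otimes> word_eval G w)"
    using inv_mult_group l letter_val_carrier w eval_carrier Cons.prems(2) by auto
  finally show ?case by simp
qed

lemma generate_word:
  assumes "g \<in> generate G Y" "Y \<subseteq> carrier G"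
  shows "\<exists>w \<in> lists (alphabet Y). word_eval G w = g"
  using assms(1)
proof (induction rule: generate.induct)
  case one
  then show ?case by (intro bexI[of _ "[]"]) auto
next
  case (incl h)
  then show ?case using assms(2)
    by (intro bexI[of _ "[(h, False)]"]) (auto simp: letter_val_def alphabet_def)
next
  case (inv h)
  then show ?case using assms(2)
    by (intro bexI[of _ "[(h, True)]"]) (auto simp: letter_val_def alphabet_def)
next
  case (eng h1 h2)
  then obtain u v where "u \<in> lists (alphabet Y)" "v \<in> lists (alphabet Y)"
    "word_eval G u = h1" "word_eval G v = h2" by blast
  then show ?case using eval_append assms(2) by (intro bexI[of _ "u @ v"]) auto
qed

end

theorem lemma4p3:
  fixes G :: "('a, 'b) monoid_scheme" and Y :: "'a set" and n :: nat
  assumes "group G"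
    and "finite Y" and "Y \<subseteq> carrier G" and "generate G Y = carrier G"
  shows "U_fun (alphabet Y) (word_problem G Y) n \<ge> growth G Y (n div 2)"
proof -
  interpret group G by fact
  let ?\<Sigma> = "alphabet Y"
  let ?L = "word_problem G Y"
  define A where "A = {g \<in> carrier G. word_length G Y g \<le> n div 2}"
  have finS: "finite ?\<Sigma>" using assms(2) by (simp add: alphabet_def)
  define Wn where "Wn = {w. set w \<subseteq> ?\<Sigma> \<and> length w \<le> n}"
  have finW: "finite Wn" unfolding Wn_def by (rule finite_lists_length_le[OF finS])
  have bound: "card S \<le> card Wn" if "unif_dissimilar ?\<Sigma> ?L n S" for S
  proof -
    have "S \<subseteq> Wn" using that unfolding unif_dissimilar_def Wn_def
      by (auto; fastforce)
    then show ?thesis using finW card_mono by blast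
  qed
  have finC: "finite {card S | S. unif_dissimilar ?\<Sigma> ?L n S}"
    by (rule finite_subset[of _ "{..card Wn}"]) (auto dest: bound)
  show ?thesis
  proof (cases "finite A")
    case False
    then show ?thesis by (simp add: growth_def A_def[symmetric])
  next
    case True
    define P where "P = (\<lambda>g w. w \<in> lists ?\<Sigma> \<and> length w = word_length G Y g \<and> word_eval G w = g)"
    define wd where "wd = (\<lambda>g. SOME w. P g w)"
    have Pwd: "P g (wd g)" if "g \<in> carrier G" for g
    proof -
      have "g \<in> generate G Y" using that assms(4) by simp
      then obtain w where "w \<in> lists ?\<Sigma>" "word_eval G w = g"
        using generate_word[of g Y] assms(3) by blast
      then have ex: "\<exists>k. \<exists>w \<in> lists ?\<Sigma>. length w = k \<and> word_eval G w = g" by blast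
      have "\<exists>w \<in> lists ?\<Sigma>. length w = word_length G Y g \<and> word_eval G w = g"
        unfolding word_length_def by (rule LeastI_ex[OF ex])
      then have "\<exists>w. P g w" unfolding P_def by blast
      then show ?thesis unfolding wd_def by (rule someI_ex)
    qed
    define S where "S = wd ` A"
    have inj: "inj_on wd A"
    proof (rule inj_onI)
      fix x y assume "x \<in> A" "y \<in> A" "wd x = wd y"
      then show "x = y" using Pwd unfolding A_def P_def by (metis (no_types, lifting) mem_Collect_eq)
    qed
    have cardS: "card S = card A" unfolding S_def using inj by (rule card_image)
    have ud: "unif_dissimilar ?\<Sigma> ?L n S"
      unfolding unif_dissimilar_def
    proof (intro conjI ballI)
      show "finite S" using True S_def by simp
      show "S \<subseteq> lists ?\<Sigma>" using Pwd unfolding S_def A_def P_def by auto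
    next
      fix w assume "w \<in> S"
      then obtain g where g: "g \<in> A" "w = wd g" unfolding S_def by auto
      have gc: "g \<in> carrier G" and gl: "word_length G Y g \<le> n div 2" using g unfolding A_def by auto
      have Pg: "P g w" using Pwd gc g by simp
      have wl: "w \<in> lists ?\<Sigma>" and wlen: "length w \<le> n div 2" and we: "word_eval G w = g"
        using Pg gl unfolding P_def by auto
      show "\<exists>v \<in> lists ?\<Sigma>. length (w @ v) \<le> n \<and> w @ v \<in> ?L \<and>
        (\<forall>w' \<in> S. w' \<noteq> w \<longrightarrow> length (w' @ v) \<le> n \<and> w' @ v \<notin> ?L)"
      proof (intro bexI[of _ "winv w"] conjI ballI impI)
        show vl: "winv w \<in> lists ?\<Sigma>" using wl by (rule winv_lists)
        show "length (w @ winv w) \<le> n" using wlen by simp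
        show "w @ winv w \<in> ?L" unfolding word_problem_def
          using wl vl eval_append[OF wl vl assms(3)] eval_winv[OF wl assms(3)]
            eval_carrier[OF wl assms(3)] by auto
        fix w' assume w': "w' \<in> S" "w' \<noteq> w"
        then obtain h where h: "h \<in> A" "w' = wd h" unfolding S_def by auto
        have hc: "h \<in> carrier G" and hl: "word_length G Y h \<le> n div 2" using h unfolding A_def by auto
        have w'l: "w' \<in> lists ?\<Sigma>" and w'len: "length w' \<le> n div 2" and w'e: "word_eval G w' = h"
          using Pwd[OF hc] h hl unfolding P_def by auto
        show "length (w' @ winv w) \<le> n" using wlen w'len by simp
        have hg: "h \<noteq> g" using w' g h by auto
        have "word_eval G (w' @ winv w) = h \<otimes>\<^bsub>G\<^esub> inv\<^bsub>G\<^esub> g"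
          using eval_append[OF w'l vl assms(3)] eval_winv[OF wl assms(3)] we w'e by simp
        moreover have "h \<otimes>\<^bsub>G\<^esub> inv\<^bsub>G\<^esub> g \<noteq> \<one>\<^bsub>G\<^esub>" using hg hc gc
          by (metis inv_closed inv_equality l_inv r_inv m_assoc r_one)
        ultimately show "w' @ winv w \<notin> ?L" unfolding word_problem_def by auto
      qed
    qed
    have "card S \<le> U_fun ?\<Sigma> ?L n" unfolding U_fun_def
      using ud finC by (intro Max_ge) auto
    then show ?thesis using cardS by (simp add: growth_def A_def)
  qed
qed

end
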